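(* For every triple of integers $0\le i<j<k$, the following seven elements of $\mathcal S$ belong to $\mathcal I$ (writing $\pi_{(a|b)}$ for hooks and $\pi_{(a_1,a_2|b_1,b_2)}$, $\pi_{(a_1,a_2,a_3|b_1,b_2,b_3)}$ for partitions of Frobenius rank 2, 3, and $\pi_{(\emptyset|\emptyset)}=\pi_\emptyset$): $\kappa_1=\pi_{\emptyset}(\pi_{(i|i)}\pi_{(k,j|k,j)}+\pi_{(j|k)}\pi_{(k,i|j,i)})-\pi_{(i|i)}\pi_{(j|j)}\pi_{(k|k)}+\pi_{(i|j)}\pi_{(j|k)}\pi_{(k|i)}$; $\kappa_2=\pi_{\emptyset}(\pi_{(j|j)}\pi_{(k,i|k,i)}-\pi_{(k|i)}\pi_{(j,i|k,j)})-\pi_{(i|i)}\pi_{(j|j)}\pi_{(k|k)}+\pi_{(i|j)}\pi_{(j|k)}\pi_{(k|i)}$; $\kappa_3=\pi_{\emptyset}(\pi_{(k|k)}\pi_{(j,i|j,i)}+\pi_{(i|j)}\pi_{(k,j|k,i)})-\pi_{(i|i)}\pi_{(j|j)}\pi_{(k|k)}+\pi_{(i|j)}\pi_{(j|k)}\pi_{(k|i)}$; $\kappa_1^T=\pi_{\emptyset}(\pi_{(i|i)}\pi_{(k,j|k,j)}+\pi_{(k|j)}\pi_{(j,i|k,i)})-\pi_{(i|i)}\pi_{(j|j)}\pi_{(k|k)}+\pi_{(j|i)}\pi_{(k|j)}\pi_{(i|k)}$; $\kappa_2^T=\pi_{\emptyset}(\pi_{(j|j)}\pi_{(k,i|k,i)}-\pi_{(i|k)}\pi_{(k,j|j,i)})-\pi_{(i|i)}\pi_{(j|j)}\pi_{(k|k)}+\pi_{(j|i)}\pi_{(k|j)}\pi_{(i|k)}$;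 $\kappa_3^T=\pi_{\emptyset}(\pi_{(k|k)}\pi_{(j,i|j,i)}+\pi_{(j|i)}\pi_{(k,i|k,j)})-\pi_{(i|i)}\pi_{(j|j)}\pi_{(k|k)}+\pi_{(j|i)}\pi_{(k|j)}\pi_{(i|k)}$; and, with $X:=\pi_{(i|j)}\pi_{(j|k)}\pi_{(k|i)}$, $\kappa_0=\pi_{\emptyset}^2\pi_{(k,j,i|k,j,i)}X-X^2+X\big(2\pi_{(i|i)}\pi_{(j|j)}\pi_{(k|k)}-\pi_{\emptyset}(\pi_{(i|i)}\pi_{(k,j|k,j)}+\pi_{(j|j)}\pi_{(k,i|k,i)}+\pi_{(k|k)}\pi_{(j,i|j,i)})\big)-(\pi_{(i|i)}\pi_{(j|j)}-\pi_{\emptyset}\pi_{(j,i|j,i)})(\pi_{(i|i)}\pi_{(k|k)}-\pi_{\emptyset}\pi_{(k,i|k,i)})(\pi_{(j|j)}\pi_{(k|k)}-\pi_{\emptyset}\pi_{(k,j|k,j)})$.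
   Context: Partitions and Frobenius notation: a partition $\lambda$ of Frobenius rank $r$ is written $\lambda=(a_1,\dots,a_r\mid b_1,\dots,b_r)$ with $a_1>\dots>a_r\ge 0$, $b_1>\dots>b_r\ge 0$, $a_i=\lambda_i-i$, $b_i=\lambda'_i-i$ ($\lambda'$ the conjugate partition); $\emptyset$ denotes the empty partition (rank $0$). Let $\mathcal S=\mathbb C[\pi_\lambda]$ be the polynomial ring in countably many indeterminates $\pi_\lambda$ indexed by all partitions $\lambda$. Plücker relations: for integers $0<k<N$ and a $k$-tuple $L=(L_1,\dots,L_k)$ of integers in $\{-k,\dots,N-k-1\}$ set $\tilde\pi_L:=\mathrm{sgn}(L)\,\pi_{\lambda(L)}$, where $\mathrm{sgn}(L)$ is the sign of the permutation sorting $L$ into increasing order ($\mathrm{sgn}(L):=0$ if $L$ has a repeated entry) and, if $L'_1<\dots<L'_k$ is the increasing rearrangement of $L$, $\lambda(L)$ is the partition with parts $\lambda_i=L'_{k-i+1}+i$, $i=1,\dots,k$. For a $(k-1)$-tuple $I$ and a $(k+1)$-tuple $J$ with entries in $\{-k,\dots,N-k-1\}$ the Plücker quadratic form is $p_{I,J}:=\sum_{j=1}^{k+1}(-1)^j\tilde\pi_{I_1,\dots,I_{k-1},J_j}\,\tilde\pi_{J_1,\dots,\widehat{J_j},\dots,J_{k+1}}\in\mathcal S$ (hat = omission). $\mathcal I\subset\mathcal S$ is the ideal generated by all $p_{I,J}$ for all $0<k<N$ and all such $I,J$. *)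

theory Defs
  imports Complex_Main "HOL-Library.Poly_Mapping"
begin

(* Partitions: nonincreasing lists of positive integers; lambda_i = xs ! (i-1). *)
typedef partition = "{xs :: nat list. sorted_wrt (\<ge>) xs \<and> (\<forall>x\<in>set xs. 0 < x)}"
  by (rule exI[of _ "[]"]) simp

definition conj_list :: "nat list \<Rightarrow> nat list" where
  "conj_list xs = (if xs = [] then [] else
     map (\<lambda>j. length (filter (\<lambda>p. j \<le> p) xs)) [1..<hd xs + 1])"

definition frob_rank :: "nat list \<Rightarrow> nat" where
  "frob_rank xs = length (filter (\<lambda>i. i + 1 \<le> xs ! i) [0..<length xs])"

definition frob_a :: "nat list \<Rightarrow> nat list" where
  "frob_a xs = map (\<lambda>i. xs ! i - (i + 1)) [0..<frob_rank xs]"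

definition frob_b :: "nat list \<Rightarrow> nat list" where
  "frob_b xs = map (\<lambda>i. conj_list xs ! i - (i + 1)) [0..<frob_rank xs]"

definition frob :: "nat list \<Rightarrow> nat list \<Rightarrow> partition" where
  "frob a b = (THE p. frob_a (Rep_partition p) = a \<and> frob_b (Rep_partition p) = b)"

type_synonym S = "(partition \<Rightarrow>\<^sub>0 nat) \<Rightarrow>\<^sub>0 complex"

definition pvar :: "partition \<Rightarrow> S" where
  "pvar p = Poly_Mapping.single (Poly_Mapping.single p 1) 1"

definition sgn_tuple :: "int list \<Rightarrow> int" where
  "sgn_tuple L = (if distinct L then
      (-1) ^ card {(a, b). a < b \<and> b < length L \<and> L ! b < L ! a} else 0)"

definition lam_tuple :: "int list \<Rightarrow> partition" where
  "lam_tuple L = Abs_partition (filter (\<lambda>x. 0 < x)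
     (map (\<lambda>i. nat (sort L ! (length L - i) + int i)) [1..<length L + 1]))"

definition tpi :: "int list \<Rightarrow> S" where
  "tpi L = of_int (sgn_tuple L) * pvar (lam_tuple L)"

definition pluecker :: "int list \<Rightarrow> int list \<Rightarrow> S" where
  "pluecker I J = (\<Sum>j = 1..length J.
      (-1) ^ j * tpi (I @ [J ! (j - 1)]) * tpi (take (j - 1) J @ drop j J))"

definition pluecker_gens :: "S set" where
  "pluecker_gens = {pluecker I J | I J k N. 0 < k \<and> k < N \<and>
      length I = k - 1 \<and> length J = k + 1 \<and>
      set I \<subseteq> {- int k .. int N - int k - 1} \<and> set J \<subseteq> {- int k .. int N - int k - 1}}"

inductive_set ideal_gen :: "'a::comm_ring_1 set \<Rightarrow> 'a set" for G where
  zero: "0 \<in> ideal_gen G"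
| gen: "g \<in> G \<Longrightarrow> g \<in> ideal_gen G"
| add: "a \<in> ideal_gen G \<Longrightarrow> b \<in> ideal_gen G \<Longrightarrow> a + b \<in> ideal_gen G"
| mult: "a \<in> ideal_gen G \<Longrightarrow> r * a \<in> ideal_gen G"

definition plueckerIdeal :: "S set" where
  "plueckerIdeal = ideal_gen pluecker_gens"

abbreviation P :: "nat list \<Rightarrow> nat list \<Rightarrow> S" where
  "P a b \<equiv> pvar (frob a b)"

end

theory Submission
  imports Defs
begin

definition Dg :: "nat list \<Rightarrow> (nat \<times> nat) set" where
  "Dg xs = {(r,c). r < length xs \<and> c < xs!r}"
definition Df :: "nat list \<Rightarrow> nat list \<Rightarrow> (nat \<times> nat) set" where
  "Df a b = {(r,c). (r \<le> c \<and> r < length a \<and> c - r \<le> a!r) \<or> (c < r \<and> c < length b \<and> r - c \<le> b!c)}"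
definition ispart :: "nat list \<Rightarrow> bool" where
  "ispart xs = (sorted_wrt (\<ge>) xs \<and> (\<forall>x\<in>set xs. 0<x))"

lemma nat_eq_from_less: "(\<And>c::nat. c < x \<longleftrightarrow> c < y) \<Longrightarrow> x = y"
  by (metis less_irrefl linorder_neqE_nat)

lemma Dg_inj:
  assumes "\<forall>x\<in>set xs. 0<x" "\<forall>x\<in>set ys. 0<x" "Dg xs = Dg ys"
  shows "xs = ys"
proof -
  have m: "(r,c) \<in> Dg xs \<longleftrightarrow> (r,c) \<in> Dg ys" for r c using assms(3) by simp
  have len: "r < length xs \<longleftrightarrow> r < length ys" for r
  proof -
    have "r < length xs \<longleftrightarrow> (r,0) \<in> Dg xs" using assms(1) nth_mem[of r xs] by (auto simp: Dg_def)
    moreover have "r < length ys \<longleftrightarrow> (r,0) \<in> Dg ys" using assms(2) nth_mem[of r ys] by (auto simp: Dg_def)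
    ultimately show ?thesis using m by blast
  qed
  hence L: "length xs = length ys" by (rule nat_eq_from_less)
  show ?thesis
  proof (rule nth_equalityI[OF L])
    fix r assume r: "r < length xs"
    show "xs!r = ys!r"
      by (rule nat_eq_from_less) (use m r L in \<open>auto simp: Dg_def\<close>)
  qed
qed

lemma dc_lemma:
  fixes P :: "nat \<Rightarrow> bool"
  assumes "\<And>r r'. P r \<Longrightarrow> r' \<le> r \<Longrightarrow> P r'" "\<not> P N"
  shows "\<exists>n. \<forall>r. P r \<longleftrightarrow> r < n"
proof -
  define n where "n = (LEAST r. \<not> P r)"
  have "\<not> P n" unfolding n_def by (rule LeastI[of _ N]) (rule assms(2))
  have "P r" if "r < n" for r using not_less_Least[OF that[unfolded n_def]] by simp
  moreover have "\<not> P r" if "n \<le> r" for r using assms(1) \<open>\<not> P n\<close> that by blast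
  ultimately show ?thesis by (metis not_less)
qed

lemma filter_less_upt: "filter (\<lambda>i. i < n) [0..<m] = [0..<min n m]"
  by (induction m) auto

lemma ispart_mono: "ispart xs \<Longrightarrow> i \<le> j \<Longrightarrow> j < length xs \<Longrightarrow> xs!j \<le> xs!i"
  unfolding ispart_def
  by (metis le_less order.refl sorted_wrt_iff_nth_less)

lemma rank_char:
  assumes "ispart xs"
  shows "i < frob_rank xs \<longleftrightarrow> (i < length xs \<and> i + 1 \<le> xs!i)"
proof -
  let ?Q = "\<lambda>i. i < length xs \<and> i + 1 \<le> xs!i"
  have "\<exists>n. \<forall>r. ?Q r \<longleftrightarrow> r < n"
  proof (rule dc_lemma[where N = "length xs"])
    fix r r' assume "?Q r" "r' \<le> r"
    thus "?Q r'" using ispart_mono[OF assms, of r' r] by auto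
  qed simp
  then obtain n where n: "\<And>r. ?Q r \<longleftrightarrow> r < n" by blast
  have nl: "n \<le> length xs" using n[of "n - 1"] by (cases n) auto
  have "filter (\<lambda>i. i + 1 \<le> xs!i) [0..<length xs] = filter (\<lambda>i. i < n) [0..<length xs]"
    by (rule filter_cong) (auto simp: n[symmetric])
  also have "\<dots> = [0..<n]" using nl by (simp add: filter_less_upt min_def)
  finally have "frob_rank xs = n" unfolding frob_rank_def by simp
  thus ?thesis using n by simp
qed

lemma conj_nth: "xs \<noteq> [] \<Longrightarrow> c < hd xs \<Longrightarrow> conj_list xs ! c = length (filter (\<lambda>p. c + 1 \<le> p) xs)"
proof -
  assume ne: "xs \<noteq> []" and h: "c < hd xs"
  have l: "c < length [1..<hd xs + 1]" using h by simp
  define F where "F j = length (filter (\<lambda>p. j \<le> p) xs)" for j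
  have e: "conj_list xs = map F [1..<hd xs + 1]"
    unfolding conj_list_def if_not_P[OF ne] F_def by (rule refl)
  have "conj_list xs ! c = F ([1..<hd xs + 1] ! c)" unfolding e by (rule nth_map[OF l])
  also have "[1..<hd xs + 1] ! c = 1 + c" by (rule nth_upt) (use h in simp)
  finally show ?thesis by (simp add: F_def)
qed

lemma conj_char:
  assumes "ispart xs" "xs \<noteq> []" "c < hd xs"
  shows "r < conj_list xs ! c \<longleftrightarrow> (r < length xs \<and> c < xs!r)"
proof -
  let ?Q = "\<lambda>r. r < length xs \<and> c < xs!r"
  have "\<exists>n. \<forall>r. ?Q r \<longleftrightarrow> r < n"
  proof (rule dc_lemma[where N = "length xs"])
    fix r r' assume "?Q r" "r' \<le> r"
    thus "?Q r'" using ispart_mono[OF assms(1), of r' r] by auto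
  qed simp
  then obtain n where n: "\<And>r. ?Q r \<longleftrightarrow> r < n" by blast
  have "conj_list xs ! c = length (filter (\<lambda>p. c + 1 \<le> p) xs)"
    by (rule conj_nth[OF assms(2,3)])
  also have "\<dots> = card {r. r < length xs \<and> c + 1 \<le> xs!r}"
    by (rule length_filter_conv_card)
  also have "{r. r < length xs \<and> c + 1 \<le> xs!r} = {..<n}"
  proof (intro set_eqI iffI)
    fix x assume "x \<in> {r. r < length xs \<and> c + 1 \<le> xs!r}"
    hence "?Q x" by simp
    thus "x \<in> {..<n}" using n[of x] by simp
  next
    fix x assume "x \<in> {..<n}"
    hence "?Q x" using n[of x] by simp
    thus "x \<in> {r. r < length xs \<and> c + 1 \<le> xs!r}" by simp
  qed
  finally have "conj_list xs ! c = n" by simp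
  thus ?thesis using n[of r] by simp
qed

lemma frob_a_nth: "i < frob_rank xs \<Longrightarrow> frob_a xs ! i = xs!i - (i+1)"
  and frob_b_nth: "i < frob_rank xs \<Longrightarrow> frob_b xs ! i = conj_list xs!i - (i+1)"
  and frob_len: "length (frob_a xs) = frob_rank xs" "length (frob_b xs) = frob_rank xs"
  by (auto simp: frob_a_def frob_b_def)

lemma Dg_mem: "(r,c) \<in> Dg xs \<longleftrightarrow> r < length xs \<and> c < xs!r" by (simp add: Dg_def)
lemma Df_mem: "(r,c) \<in> Df a b \<longleftrightarrow> (r \<le> c \<and> r < length a \<and> c - r \<le> a!r) \<or> (c < r \<and> c < length b \<and> r - c \<le> b!c)"
  by (simp add: Df_def)

lemma Dg_frob:
  assumes P: "ispart xs"
  shows "Dg xs = Df (frob_a xs) (frob_b xs)"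
proof -
  have "(r,c) \<in> Dg xs \<longleftrightarrow> (r,c) \<in> Df (frob_a xs) (frob_b xs)" for r c
  proof (cases "r \<le> c")
    case True
    show ?thesis
    proof (cases "r < frob_rank xs")
      case True
      hence r1: "r < length xs" "r + 1 \<le> xs!r" using rank_char[OF P, of r] by blast+
      have "frob_a xs ! r = xs!r - (r+1)" using True by (rule frob_a_nth)
      moreover have "length (frob_a xs) = frob_rank xs" by (rule frob_len)
      ultimately show ?thesis unfolding Dg_mem Df_mem using True \<open>r \<le> c\<close> r1 by auto
    next
      case False
      hence "\<not> (r < length xs \<and> r + 1 \<le> xs!r)" using rank_char[OF P, of r] by blast
      moreover have "length (frob_a xs) = frob_rank xs" by (rule frob_len)
      ultimately show ?thesis unfolding Dg_mem Df_mem using False \<open>r \<le> c\<close> by auto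
    qed
  next
    case False
    hence cr: "c < r" by simp
    show ?thesis
    proof (cases "c < frob_rank xs")
      case True
      hence c1: "c < length xs" "c + 1 \<le> xs!c" using rank_char[OF P, of c] by blast+
      have ne: "xs \<noteq> []" using c1 by auto
      have "xs!c \<le> xs!0" using ispart_mono[OF P, of 0 c] c1 by simp
      moreover have "hd xs = xs!0" using ne by (simp add: hd_conv_nth)
      ultimately have hc: "c < hd xs" using c1 by linarith
      have cc: "c < conj_list xs ! c" using conj_char[OF P ne hc, of c] c1 by simp
      have fb: "frob_b xs ! c = conj_list xs ! c - (c+1)" using True by (rule frob_b_nth)
      have lb: "length (frob_b xs) = frob_rank xs" by (rule frob_len)
      have "r < conj_list xs ! c \<longleftrightarrow> r < length xs \<and> c < xs!r" by (rule conj_char[OF P ne hc])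
      thus ?thesis unfolding Dg_mem Df_mem fb lb using True cr cc by auto
    next
      case False
      hence nc: "\<not> (c < length xs \<and> c + 1 \<le> xs!c)" using rank_char[OF P, of c] by blast
      have "\<not> (r < length xs \<and> c < xs!r)"
      proof
        assume h: "r < length xs \<and> c < xs!r"
        hence "xs!r \<le> xs!c" using ispart_mono[OF P, of c r] cr by simp
        thus False using nc h cr by auto
      qed
      moreover have "length (frob_b xs) = frob_rank xs" by (rule frob_len)
      ultimately show ?thesis unfolding Dg_mem Df_mem using False cr by auto
    qed
  qed
  thus ?thesis by (auto simp del: Dg_mem Df_mem)
qed

lemma sdec_gap:
  assumes "sorted_wrt (>) (a::nat list)" "c \<le> r" "r < length a"
  shows "a!r + (r - c) \<le> a!c"
  using assms(2,3)
proof (induction r)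
  case 0 thus ?case by simp
next
  case (Suc r)
  show ?case
  proof (cases "c = Suc r")
    case True thus ?thesis by simp
  next
    case False
    hence "c \<le> r" using Suc by simp
    have "a!(Suc r) < a!r" using assms(1) Suc.prems by (simp add: sorted_wrt_iff_nth_less)
    thus ?thesis using Suc.IH[OF \<open>c \<le> r\<close>] Suc.prems \<open>c \<le> r\<close> by simp
  qed
qed

lemma frob_from_Dg:
  assumes P: "ispart xs" and D: "Dg xs = Df a b"
    and sa: "sorted_wrt (>) a" and sb: "sorted_wrt (>) b" and len: "length a = length b"
  shows "frob_a xs = a \<and> frob_b xs = b"
proof -
  let ?q = "length a"
  have m: "(r < length xs \<and> c < xs!r) \<longleftrightarrow> (r,c) \<in> Df a b" for r c
    using D unfolding Dg_def by (metis (mono_tags, lifting) case_prod_conv mem_Collect_eq)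
  have diag: "(i,i) \<in> Df a b \<longleftrightarrow> i < ?q" for i by (auto simp: Df_def)
  have rk: "frob_rank xs = ?q"
  proof (rule nat_eq_from_less)
    fix i
    have "i + 1 \<le> xs!i \<longleftrightarrow> i < xs!i" by (simp add: Suc_le_eq)
    thus "i < frob_rank xs \<longleftrightarrow> i < ?q" using rank_char[OF P, of i] m[of i i] diag[of i] by blast
  qed
  have row: "(i,c) \<in> Df a b \<longleftrightarrow> c < a!i + i + 1" if "i < ?q" for i c
  proof (cases "i \<le> c")
    case True thus ?thesis using that by (auto simp: Df_def)
  next
    case False
    have "b!i + (i - c) \<le> b!c" using sdec_gap[OF sb, of c i] that False len by simp
    thus ?thesis using that False len by (auto simp: Df_def)
  qed
  have xsi: "xs!i = a!i + i + 1" if "i < ?q" for i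
  proof -
    have "i < length xs" using m[of i i] diag[of i] that by simp
    thus ?thesis by (intro nat_eq_from_less) (use m row that in auto)
  qed
  have fa: "frob_a xs = a"
    by (rule nth_equalityI) (auto simp: frob_len rk frob_a_nth xsi)
  have fb: "frob_b xs = b"
  proof (rule nth_equalityI)
    show "length (frob_b xs) = length b" using frob_len rk len by simp
    fix i assume "i < length (frob_b xs)"
    hence i: "i < ?q" using frob_len rk by simp
    have ne: "xs \<noteq> []" using m[of 0 0] diag[of 0] i by auto
    have "a!i + (i - 0) \<le> a!0" using sdec_gap[OF sa, of 0 i] i by simp
    have x0: "xs!0 = a!0 + 0 + 1" using xsi[of 0] i by (metis gr_implies_not0 neq0_conv)
    have "hd xs = xs!0" using ne by (simp add: hd_conv_nth)
    hence hc: "i < hd xs" using x0 \<open>a!i + (i - 0) \<le> a!0\<close> by linarith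
    have col: "(r,i) \<in> Df a b \<longleftrightarrow> r < b!i + i + 1" for r
    proof (cases "r \<le> i")
      case True
      have "a!i + (i - r) \<le> a!r" using sdec_gap[OF sa, of r i] True i by simp
      thus ?thesis using True i by (auto simp: Df_def)
    next
      case False thus ?thesis using i len by (auto simp: Df_def)
    qed
    have "conj_list xs ! i = b!i + i + 1"
      by (rule nat_eq_from_less) (simp add: conj_char[OF P ne hc] m col)
    thus "frob_b xs ! i = b ! i" using i rk by (simp add: frob_b_nth)
  qed
  show ?thesis using fa fb by simp
qed

lemma frob_eq_Abs:
  assumes P: "ispart xs" and D: "Dg xs = Df a b"
    and sa: "sorted_wrt (>) a" and sb: "sorted_wrt (>) b" and len: "length a = length b"
  shows "frob a b = Abs_partition xs"
proof -
  have mem: "xs \<in> {xs. sorted_wrt (\<ge>) xs \<and> (\<forall>x\<in>set xs. 0 < x)}" using P by (simp add: ispart_def)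
  have R: "Rep_partition (Abs_partition xs) = xs" by (rule Abs_partition_inverse[OF mem])
  show ?thesis unfolding frob_def
  proof (rule the_equality)
    show "frob_a (Rep_partition (Abs_partition xs)) = a \<and> frob_b (Rep_partition (Abs_partition xs)) = b"
      unfolding R by (rule frob_from_Dg[OF P D sa sb len])
  next
    fix p assume h: "frob_a (Rep_partition p) = a \<and> frob_b (Rep_partition p) = b"
    have Pp: "ispart (Rep_partition p)" using Rep_partition[of p] by (simp add: ispart_def)
    have "Dg (Rep_partition p) = Dg xs" using Dg_frob[OF Pp] h D by simp
    hence "Rep_partition p = xs" using Dg_inj Pp P unfolding ispart_def by blast
    thus "p = Abs_partition xs" by (metis Rep_partition_inverse)
  qed
qed



lemma sinc_gap:
  assumes "sorted_wrt (<) (s::int list)" "p \<le> q" "q < length s"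
  shows "s!p + int (q - p) \<le> s!q"
  using assms(2,3)
proof (induction q)
  case 0 thus ?case by simp
next
  case (Suc q)
  show ?case
  proof (cases "p = Suc q")
    case True thus ?thesis by simp
  next
    case False
    hence "p \<le> q" using Suc by simp
    have "s!q < s!(Suc q)" using assms(1) Suc.prems by (simp add: sorted_wrt_iff_nth_less)
    thus ?thesis using Suc.IH[OF \<open>p \<le> q\<close>] Suc.prems \<open>p \<le> q\<close> by (simp add: Suc_diff_le)
  qed
qed

lemma card_ge_sorted:
  assumes s: "sorted_wrt (<) (s::int list)" and r: "r < length s"
  shows "t \<le> s!(length s - 1 - r) \<longleftrightarrow> r + 1 \<le> card {x\<in>set s. t \<le> x}"
proof -
  let ?n = "length s" let ?p = "length s - 1 - r"
  have ds: "distinct s" using s by (simp add: strict_sorted_iff)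
  have eq: "{x\<in>set s. t \<le> x} = (\<lambda>q. s!q) ` {q. q < ?n \<and> t \<le> s!q}"
    by (auto simp: in_set_conv_nth)
  have inj: "inj_on (\<lambda>q. s!q) {q. q < ?n \<and> t \<le> s!q}"
    using ds by (auto simp: inj_on_def nth_eq_iff_index_eq)
  have c: "card {x\<in>set s. t \<le> x} = card {q. q < ?n \<and> t \<le> s!q}"
    unfolding eq by (rule card_image[OF inj])
  show ?thesis
  proof
    assume h: "t \<le> s!?p"
    have "{?p..<?n} \<subseteq> {q. q < ?n \<and> t \<le> s!q}"
    proof
      fix q assume "q \<in> {?p..<?n}"
      hence "?p \<le> q" "q < ?n" by auto
      hence "s!?p \<le> s!q" using sinc_gap[OF s, of ?p q] by simp
      thus "q \<in> {q. q < ?n \<and> t \<le> s!q}" using h \<open>q < ?n\<close> by simp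
    qed
    hence "card {?p..<?n} \<le> card {q. q < ?n \<and> t \<le> s!q}" by (rule card_mono[rotated]) simp
    thus "r + 1 \<le> card {x\<in>set s. t \<le> x}" using c r by simp
  next
    assume h: "r + 1 \<le> card {x\<in>set s. t \<le> x}"
    show "t \<le> s!?p"
    proof (rule ccontr)
      assume "\<not> t \<le> s!?p"
      have "{q. q < ?n \<and> t \<le> s!q} \<subseteq> {?p+1..<?n}"
      proof
        fix q assume q: "q \<in> {q. q < ?n \<and> t \<le> s!q}"
        have "?p < q"
        proof (rule ccontr)
          assume "\<not> ?p < q"
          hence g: "s!q + int (?p - q) \<le> s!?p" using sinc_gap[OF s, of q ?p] r by simp
          hence "s!q \<le> s!?p" by linarith
          thus False using q \<open>\<not> t \<le> s!?p\<close> by simp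
        qed
        thus "q \<in> {?p+1..<?n}" using q by simp
      qed
      hence "card {q. q < ?n \<and> t \<le> s!q} \<le> card {?p+1..<?n}" by (rule card_mono[rotated]) simp
      thus False using c h r by simp
    qed
  qed
qed

lemma filter_pos_takeWhile:
  "sorted_wrt (\<ge>) (M::nat list) \<Longrightarrow> filter (\<lambda>x. 0 < x) M = takeWhile (\<lambda>x. 0 < x) M"
proof (induction M)
  case Nil thus ?case by simp
next
  case (Cons x xs)
  show ?case
  proof (cases "0 < x")
    case True thus ?thesis using Cons by simp
  next
    case False
    hence "\<forall>y\<in>set xs. y = 0" using Cons.prems by auto
    hence "filter (\<lambda>x. 0 < x) xs = []" by (simp add: filter_empty_conv)
    thus ?thesis using False by simp
  qed
qed

definition lamlist :: "int list \<Rightarrow> nat list" where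
  "lamlist L = filter (\<lambda>x. 0 < x)
     (map (\<lambda>i. nat (sort L ! (length L - i) + int i)) [1..<length L + 1])"

lemma lam_tuple_lamlist: "lam_tuple L = Abs_partition (lamlist L)"
  by (simp add: lam_tuple_def lamlist_def)

lemma lamlist_props:
  assumes "distinct L"
  shows "ispart (lamlist L) \<and>
    Dg (lamlist L) = {(r,c). r < length L \<and> r + 1 \<le> card {x\<in>set L. int c - int r \<le> x}}"
proof -
  define s where "s = sort L"
  define m where "m = length L"
  have ss: "sorted_wrt (<) s" unfolding s_def using assms by (simp add: strict_sorted_iff distinct_sort)
  have ls: "length s = m" unfolding s_def m_def by simp
  have sets: "set s = set L" unfolding s_def by simp
  define M where "M = map (\<lambda>i. nat (s ! (m - i) + int i)) [1..<m + 1]"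
  have LM: "lamlist L = filter (\<lambda>x. 0 < x) M" unfolding lamlist_def M_def s_def m_def by simp
  have lenM: "length M = m" unfolding M_def by simp
  have Mr: "M!r = nat (s!(m - 1 - r) + int r + 1)" if "r < m" for r
  proof -
    have l: "r < length [1..<m+1]" using that by simp
    have "M!r = nat (s ! (m - [1..<m+1]!r) + int ([1..<m+1]!r))" unfolding M_def by (rule nth_map[OF l])
    also have "[1..<m+1]!r = 1 + r" by (rule nth_upt) (use that in simp)
    finally show ?thesis by (simp add: algebra_simps)
  qed
  have Mmono: "sorted_wrt (\<ge>) M"
  proof (subst sorted_wrt_iff_nth_less, intro allI impI)
    fix r r' assume h: "r < r'" "r' < length M"
    hence "r < m" "r' < m" using lenM by auto
    have "s!(m-1-r') + int ((m-1-r) - (m-1-r')) \<le> s!(m-1-r)"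
      using sinc_gap[OF ss, of "m-1-r'" "m-1-r"] h \<open>r' < m\<close> ls by simp
    moreover have "int ((m-1-r) - (m-1-r')) = int r' - int r" using h \<open>r' < m\<close> by simp
    ultimately have "s!(m-1-r') + int r' + 1 \<le> s!(m-1-r) + int r + 1" by linarith
    thus "M!r' \<le> M!r" unfolding Mr[OF \<open>r < m\<close>] Mr[OF \<open>r' < m\<close>] by (rule nat_mono)
  qed
  have TW: "lamlist L = takeWhile (\<lambda>x. 0 < x) M" using LM filter_pos_takeWhile[OF Mmono] by simp
  have ip: "ispart (lamlist L)" unfolding ispart_def LM using Mmono
    by (auto intro: sorted_wrt_filter)
  have D: "(r,c) \<in> Dg (lamlist L) \<longleftrightarrow> r < m \<and> c < M!r" for r c
  proof
    assume "(r,c) \<in> Dg (lamlist L)"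
    hence h: "r < length (takeWhile (\<lambda>x. 0 < x) M)" "c < takeWhile (\<lambda>x. 0 < x) M ! r"
      unfolding Dg_mem TW by auto
    have "r < length M" using h(1) length_takeWhile_le[of "\<lambda>x. 0 < x" M] by linarith
    thus "r < m \<and> c < M!r" using h takeWhile_nth[OF h(1)] lenM by simp
  next
    assume h: "r < m \<and> c < M!r"
    have "\<forall>i<Suc r. 0 < M!i"
    proof (intro allI impI)
      fix i assume "i < Suc r"
      hence "M!r \<le> M!i" using Mmono h lenM
        by (metis le_less less_Suc_eq_le sorted_wrt_iff_nth_less)
      thus "0 < M!i" using h by simp
    qed
    hence "Suc r \<le> length (takeWhile (\<lambda>x. 0 < x) M)"
      using h lenM by (intro length_takeWhile_less_P_nth) auto
    hence "r < length (takeWhile (\<lambda>x. 0 < x) M)" by simp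
    thus "(r,c) \<in> Dg (lamlist L)" unfolding Dg_mem TW using takeWhile_nth[of r "\<lambda>x. 0 < x" M] h by simp
  qed
  have E: "r < m \<and> c < M!r \<longleftrightarrow> r < m \<and> r + 1 \<le> card {x\<in>set L. int c - int r \<le> x}" for r c
  proof (cases "r < m")
    case True
    have "c < M!r \<longleftrightarrow> int c - int r \<le> s!(m-1-r)" unfolding Mr[OF True] by linarith
    also have "\<dots> \<longleftrightarrow> r + 1 \<le> card {x\<in>set s. int c - int r \<le> x}"
      using card_ge_sorted[OF ss, of r] True ls by simp
    finally show ?thesis using sets by simp
  qed simp
  show ?thesis using ip D E unfolding m_def by auto
qed



definition Sset :: "nat \<Rightarrow> nat list \<Rightarrow> nat list \<Rightarrow> int set" where
  "Sset m a b = ({-int m..-1} - (\<lambda>y. - int y - 1) ` set b) \<union> int ` set a"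

lemma card_ge_dec:
  assumes a: "sorted_wrt (>) (a::nat list)"
  shows "r + 1 \<le> card {y\<in>set a. u \<le> y} \<longleftrightarrow> r < length a \<and> u \<le> a!r"
proof (cases "r < length a")
  case True
  define s where "s = rev (map int a)"
  have ss: "sorted_wrt (<) s" unfolding s_def using a
    by (simp add: sorted_wrt_rev sorted_wrt_map)
  have ls: "length s = length a" unfolding s_def by simp
  have sn: "s!(length s - 1 - r) = int (a!r)" unfolding s_def using True by (simp add: rev_nth)
  have "{x\<in>set s. int u \<le> x} = int ` {y\<in>set a. u \<le> y}" unfolding s_def by auto
  hence "card {x\<in>set s. int u \<le> x} = card {y\<in>set a. u \<le> y}" by (simp add: card_image)
  thus ?thesis using card_ge_sorted[OF ss, of r "int u"] True ls sn by simp
next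
  case False
  have "card {y\<in>set a. u \<le> y} \<le> card (set a)" by (rule card_mono) auto
  also have "\<dots> \<le> length a" by (rule card_length)
  finally show ?thesis using False by simp
qed

lemma distinct_dec: "sorted_wrt (>) (a::nat list) \<Longrightarrow> distinct a"
proof -
  assume "sorted_wrt (>) a"
  hence "sorted_wrt (<) (rev a)" by (simp add: sorted_wrt_rev)
  thus ?thesis by (simp add: strict_sorted_iff)
qed

lemma Sset_count:
  assumes sa: "sorted_wrt (>) a" and sb: "sorted_wrt (>) b" and len: "length a = length b"
    and bm: "\<forall>y\<in>set b. y < m"
  shows "(r < m \<and> r + 1 \<le> card {x\<in>Sset m a b. int c - int r \<le> x}) \<longleftrightarrow> (r,c) \<in> Df a b"
proof -
  let ?q = "length a"
  let ?\<beta> = "\<lambda>y::nat. - int y - 1"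
  have da: "distinct a" "distinct b" using sa sb by (auto intro: distinct_dec)
  have bq: "b!c + c < m" if "c < ?q" for c
  proof -
    have "b!c + (c - 0) \<le> b!0" using sdec_gap[OF sb, of 0 c] that len by simp
    moreover have "b!0 < m" using bm that len by (metis gr_implies_not0 neq0_conv nth_mem)
    ultimately show ?thesis by simp
  qed
  show ?thesis
  proof (cases "r \<le> c")
    case True
    define d where "d = c - r"
    have "{x\<in>Sset m a b. int c - int r \<le> x} = int ` {y\<in>set a. d \<le> y}"
      unfolding Sset_def d_def using True by auto
    hence "card {x\<in>Sset m a b. int c - int r \<le> x} = card {y\<in>set a. d \<le> y}"
      by (simp add: card_image)
    hence "(r + 1 \<le> card {x\<in>Sset m a b. int c - int r \<le> x}) \<longleftrightarrow> r < ?q \<and> d \<le> a!r"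
      using card_ge_dec[OF sa] by simp
    moreover have "r < ?q \<Longrightarrow> r < m" using bq[of r] by simp
    ultimately show ?thesis unfolding Df_mem d_def using True by auto
  next
    case False
    hence cr: "c < r" by simp
    show ?thesis
    proof (cases "r < m")
      case False
      have "\<not> (c < ?q \<and> r - c \<le> b!c)" using bq[of c] False by auto
      thus ?thesis using False cr len unfolding Df_mem by auto
    next
      case True
      define e where "e = r - c"
      define t where "t = int c - int r"
      have te: "t = - int e" unfolding t_def e_def using cr by simp
      define A1 where "A1 = {t..-1} - ?\<beta> ` set b"
      have tm: "- int m \<le> t" "t \<le> 0" unfolding t_def using True cr by auto
      have ia: "x \<in> int ` set a \<Longrightarrow> t \<le> x" for x using tm by auto
      have split: "{x\<in>Sset m a b. t \<le> x} = A1 \<union> int ` set a"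
      proof (rule set_eqI)
        fix x
        show "x \<in> {x\<in>Sset m a b. t \<le> x} \<longleftrightarrow> x \<in> A1 \<union> int ` set a"
          unfolding Sset_def A1_def mem_Collect_eq Un_iff Diff_iff atLeastAtMost_iff
          using ia[of x] tm by linarith
      qed
      have disj: "A1 \<inter> int ` set a = {}" unfolding A1_def by auto
      have fin: "finite A1" unfolding A1_def by simp
      have c1: "card {x\<in>Sset m a b. t \<le> x} = card A1 + ?q"
        unfolding split using card_Un_disjoint[OF fin _ disj] card_image[of int "set a"]
        distinct_card[OF da(1)] by simp
      have sp2: "{t..-1} = A1 \<union> ?\<beta> ` {y\<in>set b. y < e}"
      proof (rule set_eqI)
        fix x
        have "x \<in> ?\<beta> ` {y\<in>set b. y < e} \<longleftrightarrow> x \<in> ?\<beta> ` set b \<and> t \<le> x \<and> x \<le> -1"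
          unfolding te by auto
        thus "x \<in> {t..-1} \<longleftrightarrow> x \<in> A1 \<union> ?\<beta> ` {y\<in>set b. y < e}"
          unfolding A1_def Un_iff Diff_iff atLeastAtMost_iff by blast
      qed
      have disj2: "A1 \<inter> ?\<beta> ` {y\<in>set b. y < e} = {}" unfolding A1_def by auto
      have injb: "inj_on ?\<beta> {y\<in>set b. y < e}" by (auto simp: inj_on_def)
      have "card {t..-1} = card A1 + card {y\<in>set b. y < e}"
        unfolding sp2 using card_Un_disjoint[OF fin _ disj2] card_image[OF injb] by simp
      moreover have "card {t..-1} = e" unfolding te by simp
      moreover have "card {y\<in>set b. y < e} + card {y\<in>set b. e \<le> y} = ?q"
      proof -
        have "set b = {y\<in>set b. y < e} \<union> {y\<in>set b. e \<le> y}" by auto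
        moreover have "{y\<in>set b. y < e} \<inter> {y\<in>set b. e \<le> y} = {}" by auto
        ultimately have "card (set b) = card {y\<in>set b. y < e} + card {y\<in>set b. e \<le> y}"
          using card_Un_disjoint[of "{y\<in>set b. y < e}" "{y\<in>set b. e \<le> y}"] by simp
        thus ?thesis using distinct_card[OF da(2)] len by simp
      qed
      ultimately have "card {x\<in>Sset m a b. t \<le> x} = e + card {y\<in>set b. e \<le> y}"
        using c1 by linarith
      hence "(r + 1 \<le> card {x\<in>Sset m a b. t \<le> x}) \<longleftrightarrow> c + 1 \<le> card {y\<in>set b. e \<le> y}"
        unfolding e_def using cr by linarith
      also have "\<dots> \<longleftrightarrow> c < length b \<and> e \<le> b!c" by (rule card_ge_dec[OF sb])
      finally show ?thesis unfolding Df_mem t_def e_def using True cr by auto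
    qed
  qed
qed

lemma card_Sset:
  assumes sa: "sorted_wrt (>) a" and sb: "sorted_wrt (>) b" and len: "length a = length b"
    and bm: "\<forall>y\<in>set b. y < m"
  shows "card (Sset m a b) = m"
proof -
  let ?\<beta> = "\<lambda>y::nat. - int y - 1"
  have da: "distinct a" "distinct b" using sa sb by (auto intro: distinct_dec)
  have sub: "?\<beta> ` set b \<subseteq> {-int m..-1}" using bm by force
  have inj: "inj_on ?\<beta> (set b)" by (auto simp: inj_on_def)
  have "card ({-int m..-1} - ?\<beta> ` set b) = m - length b"
    using card_Diff_subset[OF finite_imageI[OF finite_set] sub] card_image[OF inj] distinct_card[OF da(2)]
    by simp
  moreover have "length b \<le> m"
  proof -
    have "card (?\<beta> ` set b) \<le> card {-int m..-1}" by (rule card_mono[OF _ sub]) simp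
    thus ?thesis using card_image[OF inj] distinct_card[OF da(2)] by simp
  qed
  moreover have "({-int m..-1} - ?\<beta> ` set b) \<inter> int ` set a = {}" by auto
  ultimately show ?thesis unfolding Sset_def
    using card_Un_disjoint[of "{-int m..-1} - ?\<beta> ` set b" "int ` set a"] card_image[of int "set a"]
      distinct_card[OF da(1)] len by simp
qed

lemma lam_Sset:
  assumes sa: "sorted_wrt (>) a" and sb: "sorted_wrt (>) b" and len: "length a = length b"
    and bm: "\<forall>y\<in>set b. y < m"
  shows "lam_tuple (sorted_list_of_set (Sset m a b)) = frob a b"
proof -
  let ?S = "Sset m a b"
  let ?L = "sorted_list_of_set ?S"
  have fin: "finite ?S" unfolding Sset_def by simp
  have dL: "distinct ?L" by simp
  have sL: "set ?L = ?S" using fin by simp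
  have lL: "length ?L = m" using card_Sset[OF assms] by simp
  obtain ip: "ispart (lamlist ?L)" and D: "Dg (lamlist ?L) =
      {(r,c). r < length ?L \<and> r + 1 \<le> card {x\<in>set ?L. int c - int r \<le> x}}"
    using lamlist_props[OF dL] by blast
  have "Dg (lamlist ?L) = Df a b"
    unfolding D sL lL using Sset_count[OF assms] by auto
  hence "frob a b = Abs_partition (lamlist ?L)" by (rule frob_eq_Abs[OF ip _ sa sb len])
  thus ?thesis by (simp add: lam_tuple_lamlist)
qed



abbreviation sl :: "int set \<Rightarrow> int list" where "sl \<equiv> sorted_list_of_set"

lemma lam_tuple_set: "distinct L \<Longrightarrow> lam_tuple L = lam_tuple (sl (set L))"
proof -
  assume d: "distinct L"
  have e: "sl (set L) = sort L" using d by (simp add: sorted_list_of_set_sort_remdups distinct_remdups_id)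
  have "sort (sort L) = sort L" by (rule sorted_sort_id[OF sorted_sort])
  moreover have "length (sort L) = length L" by (rule length_sort)
  ultimately show ?thesis unfolding lam_tuple_def e by (simp only:)
qed

lemma sgn_sorted: "sorted_wrt (<) L \<Longrightarrow> sgn_tuple L = 1"
proof -
  assume s: "sorted_wrt (<) L"
  hence d: "distinct L" by (simp add: strict_sorted_iff)
  have E: "{(a, b). a < b \<and> b < length L \<and> L ! b < L ! a} = {}"
    using s by (auto simp: sorted_wrt_iff_nth_less dest: less_asym)
  show ?thesis unfolding sgn_tuple_def if_P[OF d] E by simp
qed

lemma sgn_snoc:
  assumes s: "sorted_wrt (<) (I::int list)" and x: "x \<notin> set I"
  shows "sgn_tuple (I @ [x]) = (-1) ^ card {y\<in>set I. x < y}"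
proof -
  let ?L = "I @ [x]" let ?n = "length I"
  have d: "distinct ?L" using s x by (simp add: strict_sorted_iff)
  have eq: "{(a, b). a < b \<and> b < length ?L \<and> ?L ! b < ?L ! a} = (\<lambda>a. (a, ?n)) ` {a. a < ?n \<and> x < I!a}"
  proof (rule set_eqI, rule iffI)
    fix z assume "z \<in> {(a, b). a < b \<and> b < length ?L \<and> ?L ! b < ?L ! a}"
    then obtain a b where z: "z = (a,b)" "a < b" "b < Suc ?n" "?L!b < ?L!a" by auto
    show "z \<in> (\<lambda>a. (a, ?n)) ` {a. a < ?n \<and> x < I!a}"
    proof (cases "b = ?n")
      case True thus ?thesis using z by (auto simp: nth_append)
    next
      case False
      hence "b < ?n" using z by simp
      hence "I!a < I!b" using s z by (simp add: sorted_wrt_iff_nth_less)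
      thus ?thesis using z \<open>b < ?n\<close> by (simp add: nth_append)
    qed
  next
    fix z assume "z \<in> (\<lambda>a. (a, ?n)) ` {a. a < ?n \<and> x < I!a}"
    thus "z \<in> {(a, b). a < b \<and> b < length ?L \<and> ?L ! b < ?L ! a}" by (auto simp: nth_append)
  qed
  have c1: "card ((\<lambda>a. (a, ?n)) ` {a. a < ?n \<and> x < I!a}) = card {a. a < ?n \<and> x < I!a}"
    by (rule card_image) (auto simp: inj_on_def)
  have dI: "distinct I" using s by (simp add: strict_sorted_iff)
  have "{y\<in>set I. x < y} = (\<lambda>a. I!a) ` {a. a < ?n \<and> x < I!a}" by (auto simp: in_set_conv_nth)
  moreover have "inj_on (\<lambda>a. I!a) {a. a < ?n \<and> x < I!a}" using dI by (auto simp: inj_on_def nth_eq_iff_index_eq)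
  ultimately have c2: "card {y\<in>set I. x < y} = card {a. a < ?n \<and> x < I!a}" by (simp add: card_image)
  show ?thesis unfolding sgn_tuple_def using d eq c1 c2 by simp
qed

lemma sgn_snoc_in: "x \<in> set I \<Longrightarrow> sgn_tuple (I @ [x]) = 0"
  by (simp add: sgn_tuple_def)

lemma del_sorted:
  assumes s: "sorted_wrt (<) (J::int list)" and p: "p < length J"
  shows "sorted_wrt (<) (take p J @ drop (Suc p) J) \<and> set (take p J @ drop (Suc p) J) = set J - {J!p}"
proof -
  have J: "J = take p J @ J!p # drop (Suc p) J" using p by (simp add: id_take_nth_drop)
  have s2: "sorted_wrt (<) (take p J @ J!p # drop (Suc p) J)" using s J by simp
  have d2: "distinct (take p J @ J!p # drop (Suc p) J)" using s2 by (simp add: strict_sorted_iff)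
  have "sorted_wrt (<) (take p J @ drop (Suc p) J)"
    using s2 by (auto simp: sorted_wrt_append)
  moreover have "set (take p J @ drop (Suc p) J) = set J - {J!p}"
    using d2 by (subst (2) J) auto
  ultimately show ?thesis by simp
qed

lemma card_less_sorted:
  assumes s: "sorted_wrt (<) (J::int list)" and p: "p < length J"
  shows "card {y\<in>set J. y < J!p} = p"
proof -
  have d: "distinct J" using s by (simp add: strict_sorted_iff)
  have "{y\<in>set J. y < J!p} = (\<lambda>q. J!q) ` {..<p}"
  proof (rule set_eqI, rule iffI)
    fix y assume "y \<in> {y\<in>set J. y < J!p}"
    then obtain q where q: "q < length J" "y = J!q" "J!q < J!p" by (auto simp: in_set_conv_nth)
    have "q < p"
    proof (rule ccontr)
      assume "\<not> q < p"
      hence "p = q \<or> p < q" by auto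
      thus False using q s p by (auto simp: sorted_wrt_iff_nth_less dest: less_asym)
    qed
    thus "y \<in> (\<lambda>q. J!q) ` {..<p}" using q by auto
  next
    fix y assume "y \<in> (\<lambda>q. J!q) ` {..<p}"
    then obtain q where "q < p" "y = J!q" by auto
    thus "y \<in> {y\<in>set J. y < J!p}" using s p by (auto simp: sorted_wrt_iff_nth_less)
  qed
  moreover have "inj_on (\<lambda>q. J!q) {..<p}" using d p by (auto simp: inj_on_def nth_eq_iff_index_eq)
  ultimately show ?thesis by (simp add: card_image)
qed

lemma tpi_sorted: "sorted_wrt (<) L \<Longrightarrow> tpi L = pvar (lam_tuple (sl (set L)))"
proof -
  assume s: "sorted_wrt (<) L"
  hence "distinct L" by (simp add: strict_sorted_iff)
  hence "lam_tuple L = lam_tuple (sl (set L))" by (rule lam_tuple_set)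
  thus ?thesis unfolding tpi_def sgn_sorted[OF s] by simp
qed

lemma img_nth: "(\<lambda>p. xs!p) ` {..<length xs} = set xs"
  by (auto simp: in_set_conv_nth)

lemma pl_formula:
  assumes fI: "finite SI" and fJ: "finite SJ"
  shows "pluecker (sl SI) (sl SJ) = (\<Sum>x\<in>SJ - SI. (-1) ^ Suc (card {y\<in>SJ. y < x} + card {y\<in>SI. x < y})
      * pvar (lam_tuple (sl (insert x SI))) * pvar (lam_tuple (sl (SJ - {x}))))"
proof -
  let ?I = "sl SI" let ?J = "sl SJ" let ?n = "length ?J"
  have sI: "sorted_wrt (<) ?I" and sJ: "sorted_wrt (<) ?J" by simp_all
  have setI: "set ?I = SI" and setJ: "set ?J = SJ" using fI fJ by simp_all
  define h where "h x = (-1) ^ Suc (card {y\<in>SJ. y < x}) * tpi (?I @ [x]) * pvar (lam_tuple (sl (SJ - {x})))" for x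
  have step1: "pluecker ?I ?J = (\<Sum>p<?n. (-1) ^ Suc p * tpi (?I @ [?J ! p]) * tpi (take p ?J @ drop (Suc p) ?J))"
    unfolding pluecker_def One_nat_def sum.atLeast1_atMost_eq by (simp only: diff_Suc_Suc diff_zero)
  have step2: "(-1) ^ Suc p * tpi (?I @ [?J ! p]) * tpi (take p ?J @ drop (Suc p) ?J) = h (?J ! p)" if p: "p < ?n" for p
  proof -
    obtain s2: "sorted_wrt (<) (take p ?J @ drop (Suc p) ?J)" and st: "set (take p ?J @ drop (Suc p) ?J) = SJ - {?J!p}"
      using del_sorted[OF sJ p] setJ by blast
    have "tpi (take p ?J @ drop (Suc p) ?J) = pvar (lam_tuple (sl (SJ - {?J!p})))"
      using tpi_sorted[OF s2] st by simp
    moreover have "card {y\<in>SJ. y < ?J!p} = p" using card_less_sorted[OF sJ p] setJ by simp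
    ultimately show ?thesis unfolding h_def by simp
  qed
  have step3: "(\<Sum>p<?n. h (?J ! p)) = (\<Sum>x\<in>SJ. h x)"
  proof -
    have inj: "inj_on (\<lambda>p. ?J!p) {..<?n}" by (auto simp: inj_on_def nth_eq_iff_index_eq)
    have im: "(\<lambda>p. ?J!p) ` {..<?n} = SJ" using setJ img_nth[of ?J] by simp
    have "(\<Sum>x\<in>(\<lambda>p. ?J!p) ` {..<?n}. h x) = (\<Sum>p<?n. h (?J ! p))"
      by (rule sum.reindex_cong[OF inj refl refl])
    thus ?thesis unfolding im by simp
  qed
  have step4: "(\<Sum>x\<in>SJ. h x) = (\<Sum>x\<in>SJ - SI. h x)"
  proof (rule sum.mono_neutral_cong_right[OF fJ])
    show "SJ - SI \<subseteq> SJ" by auto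
    show "\<forall>x\<in>SJ - (SJ - SI). h x = 0" unfolding h_def tpi_def using setI by (auto simp: sgn_snoc_in)
  qed simp
  have step5: "h x = (-1) ^ Suc (card {y\<in>SJ. y < x} + card {y\<in>SI. x < y})
      * pvar (lam_tuple (sl (insert x SI))) * pvar (lam_tuple (sl (SJ - {x})))" if x: "x \<in> SJ - SI" for x
  proof -
    have xn: "x \<notin> set ?I" using x setI by simp
    have "sgn_tuple (?I @ [x]) = (-1) ^ card {y\<in>SI. x < y}" using sgn_snoc[OF sI xn] setI by simp
    moreover have "lam_tuple (?I @ [x]) = lam_tuple (sl (insert x SI))"
    proof -
      have "distinct (?I @ [x])" using xn by simp
      hence "lam_tuple (?I @ [x]) = lam_tuple (sl (set (?I @ [x])))" by (rule lam_tuple_set)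
      also have "set (?I @ [x]) = insert x SI" using setI by simp
      finally show ?thesis .
    qed
    ultimately have "tpi (?I @ [x]) = (-1) ^ card {y\<in>SI. x < y} * pvar (lam_tuple (sl (insert x SI)))"
      unfolding tpi_def by simp
    thus ?thesis unfolding h_def by (simp add: power_add)
  qed
  have "pluecker ?I ?J = (\<Sum>p<?n. h (?J ! p))"
    unfolding step1 by (rule sum.cong[OF refl], rule step2, simp)
  also have "\<dots> = (\<Sum>x\<in>SJ - SI. h x)" using step3 step4 by simp
  also have "\<dots> = (\<Sum>x\<in>SJ - SI. (-1) ^ Suc (card {y\<in>SJ. y < x} + card {y\<in>SI. x < y})
      * pvar (lam_tuple (sl (insert x SI))) * pvar (lam_tuple (sl (SJ - {x}))))"
    by (rule sum.cong[OF refl], rule step5)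
  finally show ?thesis .
qed

lemma sign_split:
  fixes SI SJ :: "int set"
  assumes fI: "finite SI" and fJ: "finite SJ" and x: "x \<in> SJ - SI"
  shows "card {y\<in>SJ. y < x} + card {y\<in>SI. x < y} = card (SI \<inter> SJ) + card {y\<in>SJ - SI. y < x} + card {y\<in>SI - SJ. x < y}"
proof -
  let ?C = "SI \<inter> SJ"
  have fC: "finite ?C" using fI by simp
  have a: "card {y\<in>SJ. y < x} = card {y\<in>?C. y < x} + card {y\<in>SJ - SI. y < x}"
  proof -
    have "{y\<in>SJ. y < x} = {y\<in>?C. y < x} \<union> {y\<in>SJ - SI. y < x}" by auto
    moreover have "card ({y\<in>?C. y < x} \<union> {y\<in>SJ - SI. y < x}) = card {y\<in>?C. y < x} + card {y\<in>SJ - SI. y < x}"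
      by (rule card_Un_disjoint) (use fJ fI in auto)
    ultimately show ?thesis by simp
  qed
  have b: "card {y\<in>SI. x < y} = card {y\<in>?C. x < y} + card {y\<in>SI - SJ. x < y}"
  proof -
    have "{y\<in>SI. x < y} = {y\<in>?C. x < y} \<union> {y\<in>SI - SJ. x < y}" by auto
    moreover have "card ({y\<in>?C. x < y} \<union> {y\<in>SI - SJ. x < y}) = card {y\<in>?C. x < y} + card {y\<in>SI - SJ. x < y}"
      by (rule card_Un_disjoint) (use fJ fI in auto)
    ultimately show ?thesis by simp
  qed
  have c: "card {y\<in>?C. y < x} + card {y\<in>?C. x < y} = card ?C"
  proof -
    have "y < x \<or> x < y" if "y \<in> ?C" for y
    proof -
      have "y \<noteq> x" using x that by auto
      thus ?thesis by (rule linorder_neqE) auto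
    qed
    hence "?C = {y\<in>?C. y < x} \<union> {y\<in>?C. x < y}" by blast
    hence "card ?C = card ({y\<in>?C. y < x} \<union> {y\<in>?C. x < y})" by (rule arg_cong)
    also have "\<dots> = card {y\<in>?C. y < x} + card {y\<in>?C. x < y}"
      using fI by (intro card_Un_disjoint) auto
    finally show ?thesis by simp
  qed
  show ?thesis using a b c by simp
qed

lemma pl_mem:
  assumes fI: "finite SI" and fJ: "finite SJ" and m: "0 < m" "m < N"
    and cI: "card SI = m - 1" and cJ: "card SJ = m + 1"
    and bI: "SI \<subseteq> {- int m .. int N - int m - 1}" and bJ: "SJ \<subseteq> {- int m .. int N - int m - 1}"
  shows "pluecker (sl SI) (sl SJ) \<in> plueckerIdeal"
  unfolding plueckerIdeal_def
proof (rule ideal_gen.gen)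
  show "pluecker (sl SI) (sl SJ) \<in> pluecker_gens" unfolding pluecker_gens_def
    using fI fJ m cI cJ bI bJ by (intro CollectI exI[of _ "sl SI"] exI[of _ "sl SJ"] exI[of _ m] exI[of _ N]) auto
qed



lemma P_Sset:
  assumes "sorted_wrt (>) a" "sorted_wrt (>) b" "length a = length b" "\<forall>y\<in>set b. y < m"
  shows "P a b = pvar (lam_tuple (sl (Sset m a b)))"
  using lam_Sset[OF assms] by simp

lemma G2:
  assumes a: "a2 < a1" and b: "b2 < b1"
  shows "P [] [] * P [a1,a2] [b1,b2] - P [a1] [b1] * P [a2] [b2] + P [a1] [b2] * P [a2] [b1] \<in> plueckerIdeal"
proof -
  define m where "m = b1 + 1"
  define N where "N = m + a1 + 1"
  define B where "B = {-int m..-1}"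
  define y1 where "y1 = - int b1 - 1"
  define y2 where "y2 = - int b2 - 1"
  define SI where "SI = (B - {y1,y2}) \<union> {int a1}"
  define SJ where "SJ = B \<union> {int a2}"
  have m2: "2 \<le> m" unfolding m_def using b by simp
  have ord: "-int m \<le> y1" "y1 < y2" "y2 \<le> -1" "0 \<le> int a2" "int a2 < int a1"
    unfolding m_def y1_def y2_def using a b by auto
  have fin: "finite SI" "finite SJ" "finite B" unfolding SI_def SJ_def B_def by auto
  have cB: "card B = m" unfolding B_def by simp
  have sub: "{y1,y2} \<subseteq> B" unfolding B_def using ord by auto
  have c2: "card {y1,y2} = 2" using ord by simp
  have cD: "card (B - {y1,y2}) = m - 2" using card_Diff_subset[OF _ sub] cB c2 by simp
  have a1B: "int a1 \<notin> B" "int a2 \<notin> B" unfolding B_def by auto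
  have cSI: "card SI = m - 1" unfolding SI_def using cD a1B fin(3) m2 by simp
  have cSJ: "card SJ = m + 1" unfolding SJ_def using cB a1B fin(3) by simp
  have bnd: "SI \<subseteq> {- int m .. int N - int m - 1}" "SJ \<subseteq> {- int m .. int N - int m - 1}"
    unfolding SI_def SJ_def B_def N_def using a by auto
  have mem: "pluecker (sl SI) (sl SJ) \<in> plueckerIdeal"
    by (rule pl_mem[OF fin(1,2) _ _ cSI cSJ bnd]) (use m2 N_def in auto)
  have JmI: "SJ - SI = {y1, y2, int a2}" unfolding SI_def SJ_def using sub a1B ord by auto
  have ImJ: "SI - SJ = {int a1}" unfolding SI_def SJ_def using a1B ord by auto
  have cC: "card (SI \<inter> SJ) = m - 2"
  proof -
    have "SI \<inter> SJ = B - {y1,y2}" unfolding SI_def SJ_def using a1B ord by auto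
    thus ?thesis using cD by simp
  qed
  have sgn: "card {y\<in>SJ. y < x} + card {y\<in>SI. x < y} = (m - 2) + card {y\<in>{y1, y2, int a2}. y < x} + card {y\<in>{int a1}. x < y}"
    if "x \<in> SJ - SI" for x
    using sign_split[OF fin(1,2) that] unfolding JmI ImJ cC .
  have k1: "{y\<in>{y1, y2, int a2}. y < y1} = {}" "{y\<in>{int a1}. y1 < y} = {int a1}"
    "{y\<in>{y1, y2, int a2}. y < y2} = {y1}" "{y\<in>{int a1}. y2 < y} = {int a1}"
    "{y\<in>{y1, y2, int a2}. y < int a2} = {y1,y2}" "{y\<in>{int a1}. int a2 < y} = {int a1}"
    using ord by auto
  have e1: "insert y1 SI = Sset m [a1] [b2]" "SJ - {y1} = Sset m [a2] [b1]"
    "insert y2 SI = Sset m [a1] [b1]" "SJ - {y2} = Sset m [a2] [b2]"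
    "insert (int a2) SI = Sset m [a1,a2] [b1,b2]" "SJ - {int a2} = Sset m [] []"
    unfolding SI_def SJ_def Sset_def B_def y1_def y2_def using a b ord(1-3) unfolding y1_def y2_def
    by auto
  have l: "P [a1] [b2] = pvar (lam_tuple (sl (Sset m [a1] [b2])))"
    "P [a2] [b1] = pvar (lam_tuple (sl (Sset m [a2] [b1])))"
    "P [a1] [b1] = pvar (lam_tuple (sl (Sset m [a1] [b1])))"
    "P [a2] [b2] = pvar (lam_tuple (sl (Sset m [a2] [b2])))"
    "P [a1,a2] [b1,b2] = pvar (lam_tuple (sl (Sset m [a1,a2] [b1,b2])))"
    "P [] [] = pvar (lam_tuple (sl (Sset m [] [])))"
    by (rule P_Sset; use a b m_def in auto)+
  define T where "T x = (-1) ^ Suc ((m - 2) + card {y\<in>{y1, y2, int a2}. y < x} + card {y\<in>{int a1}. x < y})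
      * pvar (lam_tuple (sl (insert x SI))) * pvar (lam_tuple (sl (SJ - {x})))" for x
  have "pluecker (sl SI) (sl SJ) = (\<Sum>x\<in>SJ - SI. T x)"
    unfolding pl_formula[OF fin(1,2)] T_def by (rule sum.cong[OF refl]) (simp only: sgn)
  also have "\<dots> = T y1 + T y2 + T (int a2)"
    unfolding JmI using ord by (simp add: add.assoc)
  also have "T y1 = (-1) ^ (m - 2) * (P [a1] [b2] * P [a2] [b1])"
    unfolding T_def k1 e1 l[symmetric] by simp
  also have "T y2 = (-1) ^ (m - 2) * (- (P [a1] [b1] * P [a2] [b2]))"
    unfolding T_def k1 e1 l[symmetric] using ord by (simp add: card_insert_if)
  also have "T (int a2) = (-1) ^ (m - 2) * (P [] [] * P [a1,a2] [b1,b2])"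
    unfolding T_def k1 e1 l[symmetric] using ord by (simp add: card_insert_if mult.commute)
  also have "(-1) ^ (m - 2) * (P [a1] [b2] * P [a2] [b1]) + (-1) ^ (m - 2) * (- (P [a1] [b1] * P [a2] [b2]))
     + (-1) ^ (m - 2) * (P [] [] * P [a1,a2] [b1,b2]) = (-1) ^ (m - 2) * (P [] [] * P [a1,a2] [b1,b2] - P [a1] [b1] * P [a2] [b2] + P [a1] [b2] * P [a2] [b1])"
    by (simp add: algebra_simps)
  finally have "(-1) ^ (m - 2) * pluecker (sl SI) (sl SJ) = (P [] [] * P [a1,a2] [b1,b2] - P [a1] [b1] * P [a2] [b2] + P [a1] [b2] * P [a2] [b1])"
    by (simp add: power_mult_distrib[symmetric])
  moreover have "(-1) ^ (m - 2) * pluecker (sl SI) (sl SJ) \<in> plueckerIdeal"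
    using mem unfolding plueckerIdeal_def by (rule ideal_gen.mult)
  ultimately show ?thesis by simp
qed

lemma G3:
  assumes a: "a3 < a2" "a2 < a1" and b: "b3 < b2" "b2 < b1"
  shows "P [] [] * P [a1,a2,a3] [b1,b2,b3] - (P [a1,a2] [b2,b3] * P [a3] [b1] - P [a1,a2] [b1,b3] * P [a3] [b2] + P [a1,a2] [b1,b2] * P [a3] [b3]) \<in> plueckerIdeal"
proof -
  define m where "m = b1 + 1"
  define N where "N = m + a1 + 1"
  define B where "B = {-int m..-1}"
  define y1 where "y1 = - int b1 - 1"
  define y2 where "y2 = - int b2 - 1"
  define y3 where "y3 = - int b3 - 1"
  define SI where "SI = (B - {y1,y2,y3}) \<union> {int a1, int a2}"
  define SJ where "SJ = B \<union> {int a3}"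
  have m3: "3 \<le> m" unfolding m_def using b by simp
  have ord: "-int m \<le> y1" "y1 < y2" "y2 < y3" "y3 \<le> -1" "0 \<le> int a3" "int a3 < int a2" "int a2 < int a1"
    unfolding m_def y1_def y2_def y3_def using a b by auto
  have fin: "finite SI" "finite SJ" "finite B" unfolding SI_def SJ_def B_def by auto
  have cB: "card B = m" unfolding B_def by simp
  have sub: "{y1,y2,y3} \<subseteq> B" unfolding B_def using ord by auto
  have c2: "card {y1,y2,y3} = 3" using ord by simp
  have cD: "card (B - {y1,y2,y3}) = m - 3" using card_Diff_subset[OF _ sub] cB c2 by simp
  have a1B: "int a1 \<notin> B" "int a2 \<notin> B" "int a3 \<notin> B" unfolding B_def by auto
  have cSI: "card SI = m - 1" unfolding SI_def using cD a1B fin(3) m3 ord by simp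
  have cSJ: "card SJ = m + 1" unfolding SJ_def using cB a1B fin(3) by simp
  have bnd: "SI \<subseteq> {- int m .. int N - int m - 1}" "SJ \<subseteq> {- int m .. int N - int m - 1}"
    unfolding SI_def SJ_def B_def N_def using a by auto
  have mem: "pluecker (sl SI) (sl SJ) \<in> plueckerIdeal"
    by (rule pl_mem[OF fin(1,2) _ _ cSI cSJ bnd]) (use m3 N_def in auto)
  have JmI: "SJ - SI = {y1, y2, y3, int a3}" unfolding SI_def SJ_def using sub a1B ord by auto
  have ImJ: "SI - SJ = {int a1, int a2}" unfolding SI_def SJ_def using a1B ord by auto
  have cC: "card (SI \<inter> SJ) = m - 3"
  proof -
    have "SI \<inter> SJ = B - {y1,y2,y3}" unfolding SI_def SJ_def using a1B ord by auto
    thus ?thesis using cD by simp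
  qed
  have sgn: "card {y\<in>SJ. y < x} + card {y\<in>SI. x < y} = (m - 3) + card {y\<in>{y1, y2, y3, int a3}. y < x} + card {y\<in>{int a1, int a2}. x < y}"
    if "x \<in> SJ - SI" for x
    using sign_split[OF fin(1,2) that] unfolding JmI ImJ cC .
  have k1: "{y\<in>{y1, y2, y3, int a3}. y < y1} = {}" "{y\<in>{int a1, int a2}. y1 < y} = {int a1, int a2}"
    "{y\<in>{y1, y2, y3, int a3}. y < y2} = {y1}" "{y\<in>{int a1, int a2}. y2 < y} = {int a1, int a2}"
    "{y\<in>{y1, y2, y3, int a3}. y < y3} = {y1,y2}" "{y\<in>{int a1, int a2}. y3 < y} = {int a1, int a2}"
    "{y\<in>{y1, y2, y3, int a3}. y < int a3} = {y1,y2,y3}" "{y\<in>{int a1, int a2}. int a3 < y} = {int a1, int a2}"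
    using ord by auto
  have e1: "insert y1 SI = Sset m [a1,a2] [b2,b3]" "SJ - {y1} = Sset m [a3] [b1]"
    "insert y2 SI = Sset m [a1,a2] [b1,b3]" "SJ - {y2} = Sset m [a3] [b2]"
    "insert y3 SI = Sset m [a1,a2] [b1,b2]" "SJ - {y3} = Sset m [a3] [b3]"
    "insert (int a3) SI = Sset m [a1,a2,a3] [b1,b2,b3]" "SJ - {int a3} = Sset m [] []"
    unfolding SI_def SJ_def Sset_def B_def y1_def y2_def y3_def using a b ord(1-4) unfolding y1_def y2_def y3_def
    by auto
  have l: "P [a1,a2] [b2,b3] = pvar (lam_tuple (sl (Sset m [a1,a2] [b2,b3])))"
    "P [a3] [b1] = pvar (lam_tuple (sl (Sset m [a3] [b1])))"
    "P [a1,a2] [b1,b3] = pvar (lam_tuple (sl (Sset m [a1,a2] [b1,b3])))"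
    "P [a3] [b2] = pvar (lam_tuple (sl (Sset m [a3] [b2])))"
    "P [a1,a2] [b1,b2] = pvar (lam_tuple (sl (Sset m [a1,a2] [b1,b2])))"
    "P [a3] [b3] = pvar (lam_tuple (sl (Sset m [a3] [b3])))"
    "P [a1,a2,a3] [b1,b2,b3] = pvar (lam_tuple (sl (Sset m [a1,a2,a3] [b1,b2,b3])))"
    "P [] [] = pvar (lam_tuple (sl (Sset m [] [])))"
    by (rule P_Sset; use a b m_def in auto)+
  define T where "T x = (-1) ^ Suc ((m - 3) + card {y\<in>{y1, y2, y3, int a3}. y < x} + card {y\<in>{int a1, int a2}. x < y})
      * pvar (lam_tuple (sl (insert x SI))) * pvar (lam_tuple (sl (SJ - {x})))" for x
  have c12: "card {int a1, int a2} = 2" using ord by simp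
  have "pluecker (sl SI) (sl SJ) = (\<Sum>x\<in>SJ - SI. T x)"
    unfolding pl_formula[OF fin(1,2)] T_def by (rule sum.cong[OF refl]) (simp only: sgn)
  also have "\<dots> = T y1 + T y2 + T y3 + T (int a3)"
    unfolding JmI using ord by (simp add: add.assoc)
  also have "T y1 = (-1) ^ (m - 3) * (- (P [a1,a2] [b2,b3] * P [a3] [b1]))"
    unfolding T_def k1 e1 l[symmetric] c12 by simp
  also have "T y2 = (-1) ^ (m - 3) * (P [a1,a2] [b1,b3] * P [a3] [b2])"
    unfolding T_def k1 e1 l[symmetric] c12 using ord by (simp add: card_insert_if)
  also have "T y3 = (-1) ^ (m - 3) * (- (P [a1,a2] [b1,b2] * P [a3] [b3]))"
    unfolding T_def k1 e1 l[symmetric] c12 using ord by (simp add: card_insert_if)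
  also have "T (int a3) = (-1) ^ (m - 3) * (P [] [] * P [a1,a2,a3] [b1,b2,b3])"
    unfolding T_def k1 e1 l[symmetric] c12 using ord by (simp add: card_insert_if mult.commute)
  also have "(-1) ^ (m - 3) * (- (P [a1,a2] [b2,b3] * P [a3] [b1])) + (-1) ^ (m - 3) * (P [a1,a2] [b1,b3] * P [a3] [b2])
     + (-1) ^ (m - 3) * (- (P [a1,a2] [b1,b2] * P [a3] [b3])) + (-1) ^ (m - 3) * (P [] [] * P [a1,a2,a3] [b1,b2,b3])
     = (-1) ^ (m - 3) * (P [] [] * P [a1,a2,a3] [b1,b2,b3] - (P [a1,a2] [b2,b3] * P [a3] [b1] - P [a1,a2] [b1,b3] * P [a3] [b2] + P [a1,a2] [b1,b2] * P [a3] [b3]))"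
    by (simp add: algebra_simps)
  finally have "(-1) ^ (m - 3) * pluecker (sl SI) (sl SJ) = P [] [] * P [a1,a2,a3] [b1,b2,b3] - (P [a1,a2] [b2,b3] * P [a3] [b1] - P [a1,a2] [b1,b3] * P [a3] [b2] + P [a1,a2] [b1,b2] * P [a3] [b3])"
    by (simp add: power_mult_distrib[symmetric])
  moreover have "(-1) ^ (m - 3) * pluecker (sl SI) (sl SJ) \<in> plueckerIdeal"
    using mem unfolding plueckerIdeal_def by (rule ideal_gen.mult)
  ultimately show ?thesis by simp
qed



lemma ig_sub: "a \<in> ideal_gen G \<Longrightarrow> b \<in> ideal_gen G \<Longrightarrow> a - b \<in> ideal_gen G"
proof -
  assume a: "a \<in> ideal_gen G" and b: "b \<in> ideal_gen G"
  have "(-1) * b \<in> ideal_gen G" using b by (rule ideal_gen.mult)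
  hence "a + (-1) * b \<in> ideal_gen G" using a by (intro ideal_gen.add)
  thus ?thesis by simp
qed

lemma ig_add: "a \<in> ideal_gen G \<Longrightarrow> b \<in> ideal_gen G \<Longrightarrow> a + b \<in> ideal_gen G"
  by (rule ideal_gen.add)
lemma ig_mult: "a \<in> ideal_gen G \<Longrightarrow> r * a \<in> ideal_gen G"
  by (rule ideal_gen.mult)

theorem mainTheorem9:
  fixes i j k :: nat
  assumes "i < j" and "j < k"
  defines "E \<equiv> P [] []"
  defines "X \<equiv> P [i] [j] * P [j] [k] * P [k] [i]"
  defines "D \<equiv> P [i] [i] * P [j] [j] * P [k] [k]"
  shows
   "E * (P [i] [i] * P [k,j] [k,j] + P [j] [k] * P [k,i] [j,i]) - D + X \<in> plueckerIdeal \<and>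
    E * (P [j] [j] * P [k,i] [k,i] - P [k] [i] * P [j,i] [k,j]) - D + X \<in> plueckerIdeal \<and>
    E * (P [k] [k] * P [j,i] [j,i] + P [i] [j] * P [k,j] [k,i]) - D + X \<in> plueckerIdeal \<and>
    E * (P [i] [i] * P [k,j] [k,j] + P [k] [j] * P [j,i] [k,i]) - D
      + P [j] [i] * P [k] [j] * P [i] [k] \<in> plueckerIdeal \<and>
    E * (P [j] [j] * P [k,i] [k,i] - P [i] [k] * P [k,j] [j,i]) - D
      + P [j] [i] * P [k] [j] * P [i] [k] \<in> plueckerIdeal \<and>
    E * (P [k] [k] * P [j,i] [j,i] + P [j] [i] * P [k,i] [k,j]) - D
      + P [j] [i] * P [k] [j] * P [i] [k] \<in> plueckerIdeal \<and>
    E ^ 2 * P [k,j,i] [k,j,i] * X - X ^ 2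
      + X * (2 * D - E * (P [i] [i] * P [k,j] [k,j] + P [j] [j] * P [k,i] [k,i]
                          + P [k] [k] * P [j,i] [j,i]))
      - (P [i] [i] * P [j] [j] - E * P [j,i] [j,i])
        * (P [i] [i] * P [k] [k] - E * P [k,i] [k,i])
        * (P [j] [j] * P [k] [k] - E * P [k,j] [k,j]) \<in> plueckerIdeal"
proof -
  note I = ig_add ig_sub ig_mult
  have ij: "i < j" and jk: "j < k" and ik: "i < k" using assms by auto
  define g where "g a1 a2 b1 b2 = E * P [a1,a2] [b1,b2] - P [a1] [b1] * P [a2] [b2] + P [a1] [b2] * P [a2] [b1]" for a1 a2 b1 b2
  have gm: "a2 < a1 \<Longrightarrow> b2 < b1 \<Longrightarrow> g a1 a2 b1 b2 \<in> plueckerIdeal" for a1 a2 b1 b2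
    unfolding g_def E_def by (rule G2)
  define g3 where "g3 = E * P [k,j,i] [k,j,i] - (P [k,j] [j,i] * P [i] [k] - P [k,j] [k,i] * P [i] [j] + P [k,j] [k,j] * P [i] [i])"
  have g3m: "g3 \<in> plueckerIdeal" unfolding g3_def E_def using ij jk ik by (intro G3)
  have gkjkj: "g k j k j \<in> plueckerIdeal" using ij jk ik by (intro gm)
  have gkiji: "g k i j i \<in> plueckerIdeal" using ij jk ik by (intro gm)
  have gkiki: "g k i k i \<in> plueckerIdeal" using ij jk ik by (intro gm)
  have gjikj: "g j i k j \<in> plueckerIdeal" using ij jk ik by (intro gm)
  have gjiji: "g j i j i \<in> plueckerIdeal" using ij jk ik by (intro gm)
  have gkjki: "g k j k i \<in> plueckerIdeal" using ij jk ik by (intro gm)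
  have gjiki: "g j i k i \<in> plueckerIdeal" using ij jk ik by (intro gm)
  have gkjji: "g k j j i \<in> plueckerIdeal" using ij jk ik by (intro gm)
  have gkikj: "g k i k j \<in> plueckerIdeal" using ij jk ik by (intro gm)
  have 1: "E * (P [i] [i] * P [k,j] [k,j] + P [j] [k] * P [k,i] [j,i]) - D + X = P [i] [i] * g k j k j + P [j] [k] * g k i j i"
    unfolding g_def D_def X_def by (simp add: algebra_simps)
  have 2: "E * (P [j] [j] * P [k,i] [k,i] - P [k] [i] * P [j,i] [k,j]) - D + X = P [j] [j] * g k i k i - P [k] [i] * g j i k j"
    unfolding g_def D_def X_def by (simp add: algebra_simps)
  have 3: "E * (P [k] [k] * P [j,i] [j,i] + P [i] [j] * P [k,j] [k,i]) - D + X = P [k] [k] * g j i j i + P [i] [j] * g k j k i"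
    unfolding g_def D_def X_def by (simp add: algebra_simps)
  have 4: "E * (P [i] [i] * P [k,j] [k,j] + P [k] [j] * P [j,i] [k,i]) - D
      + P [j] [i] * P [k] [j] * P [i] [k] = P [i] [i] * g k j k j + P [k] [j] * g j i k i"
    unfolding g_def D_def X_def by (simp add: algebra_simps)
  have 5: "E * (P [j] [j] * P [k,i] [k,i] - P [i] [k] * P [k,j] [j,i]) - D
      + P [j] [i] * P [k] [j] * P [i] [k] = P [j] [j] * g k i k i - P [i] [k] * g k j j i"
    unfolding g_def D_def X_def by (simp add: algebra_simps)
  have 6: "E * (P [k] [k] * P [j,i] [j,i] + P [j] [i] * P [k,i] [k,j]) - D
      + P [j] [i] * P [k] [j] * P [i] [k] = P [k] [k] * g j i j i + P [j] [i] * g k i k j"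
    unfolding g_def D_def X_def by (simp add: algebra_simps)
  define u where "u = P [i] [j] * P [j] [i]"
  define v where "v = P [i] [k] * P [k] [i]"
  define w where "w = P [j] [k] * P [k] [j]"
  have 7: "E ^ 2 * P [k,j,i] [k,j,i] * X - X ^ 2
      + X * (2 * D - E * (P [i] [i] * P [k,j] [k,j] + P [j] [j] * P [k,i] [k,i]
                          + P [k] [k] * P [j,i] [j,i]))
      - (P [i] [i] * P [j] [j] - E * P [j,i] [j,i])
        * (P [i] [i] * P [k] [k] - E * P [k,i] [k,i])
        * (P [j] [j] * P [k] [k] - E * P [k,j] [k,j])
    = E * X * g3 + X * P [i] [k] * g k j j i - X * P [i] [j] * g k j k i
      - X * P [j] [j] * g k i k i - X * P [k] [k] * g j i j i
      + ((v - g k i k i) * (w - g k j k j) * g j i j i + u * (w - g k j k j) * g k i k i + u * v * g k j k j)"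
    unfolding g_def g3_def D_def X_def u_def v_def w_def by (simp add: algebra_simps power2_eq_square)
  show ?thesis
    unfolding 1 2 3 4 5 6 7 plueckerIdeal_def
    using gkjkj gkiji gkiki gjikj gjiji gkjki gjiki gkjji gkikj g3m
    unfolding plueckerIdeal_def
    by (intro conjI I) simp_all
qed

end
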